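(* Each member of $\mathcal{G}_1$ is cycle-extendable.
   Context: A half biwheel is obtained from a path $P$ of even length (possibly a single vertex) with color classes $A,B$, whose ends $u,v$ lie in $A$, by adding a new vertex $h$ (the hub) adjacent to every vertex of $A$; $u,v$ are the corners (if $P$ is a single vertex the result is $K_2$ and $u=v$). $\mathcal{G}_1$ (generalized wheels) consists of the graphs obtained by taking an odd $k\ge 3$ and disjoint half biwheels $H_0,\dots,H_{k-1}$ with corners $u_i,v_i$, identifying all of their hubs into a single vertex $h$, and adding the edges $v_iu_{i+1}$ for all $0\le i\le k-1$, indices modulo $k$. A matching covered graph (connected, at least two vertices, every edge in a perfect matching) is cycle-extendable if for every even cycle $C$ the graph $G-V(C)$ has a perfect matching. *)

theory Defs
  imports Main
begin

definition simple_graph :: "'a set \<Rightarrow> 'a set set \<Rightarrow> bool" where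
  "simple_graph V E \<longleftrightarrow> finite V \<and> (\<forall>e\<in>E. \<exists>u v. e = {u, v} \<and> u \<noteq> v \<and> u \<in> V \<and> v \<in> V)"

definition connected_graph :: "'a set \<Rightarrow> 'a set set \<Rightarrow> bool" where
  "connected_graph V E \<longleftrightarrow> (\<forall>u\<in>V. \<forall>v\<in>V. (\<lambda>x y. {x, y} \<in> E)\<^sup>*\<^sup>* u v)"

definition perfect_matching_on :: "'a set set \<Rightarrow> 'a set \<Rightarrow> 'a set set \<Rightarrow> bool" where
  "perfect_matching_on E W M \<longleftrightarrow> M \<subseteq> E \<and> (\<forall>e\<in>M. e \<subseteq> W) \<and> (\<forall>w\<in>W. \<exists>!e. e \<in> M \<and> w \<in> e)"

definition has_perfect_matching_on :: "'a set set \<Rightarrow> 'a set \<Rightarrow> bool" where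
  "has_perfect_matching_on E W \<longleftrightarrow> (\<exists>M. perfect_matching_on E W M)"

definition matching_covered :: "'a set \<Rightarrow> 'a set set \<Rightarrow> bool" where
  "matching_covered V E \<longleftrightarrow> simple_graph V E \<and> connected_graph V E \<and> card V \<ge> 2 \<and>
     (\<forall>e\<in>E. \<exists>M. perfect_matching_on E V M \<and> e \<in> M)"

definition even_cycle :: "'a set \<Rightarrow> 'a set set \<Rightarrow> 'a list \<Rightarrow> bool" where
  "even_cycle V E cs \<longleftrightarrow> distinct cs \<and> length cs \<ge> 3 \<and> even (length cs) \<and> set cs \<subseteq> V \<and>
     (\<forall>i < length cs. {cs ! i, cs ! ((i + 1) mod length cs)} \<in> E)"

definition cycle_extendable :: "'a set \<Rightarrow> 'a set set \<Rightarrow> bool" where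
  "cycle_extendable V E \<longleftrightarrow> matching_covered V E \<and>
     (\<forall>cs. even_cycle V E cs \<longrightarrow> has_perfect_matching_on E (V - set cs))"

definition path_edges :: "'a list \<Rightarrow> 'a set set" where
  "path_edges p = {{p ! j, p ! (j + 1)} | j. j + 1 < length p}"

text \<open>Generalized wheels (class G_1), described on the vertex set of the graph itself:
hub h, odd k \<ge> 3, paths P i (i < k) with an odd number of vertices (even length), pairwise
disjoint and avoiding h. Colour class A of P i = vertices at even positions (contains both ends);
hub adjacent to A; corners u_i = hd (P i), v_i = last (P i); edges v_i u_(i+1 mod k).\<close>
definition generalized_wheel :: "'a set \<Rightarrow> 'a set set \<Rightarrow> bool" where
  "generalized_wheel V E \<longleftrightarrow>
     (\<exists>(k::nat) h (P :: nat \<Rightarrow> 'a list).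
        odd k \<and> k \<ge> 3 \<and>
        (\<forall>i<k. odd (length (P i)) \<and> distinct (P i) \<and> h \<notin> set (P i)) \<and>
        (\<forall>i<k. \<forall>j<k. i \<noteq> j \<longrightarrow> set (P i) \<inter> set (P j) = {}) \<and>
        V = insert h (\<Union>i<k. set (P i)) \<and>
        E = (\<Union>i<k. path_edges (P i))
            \<union> (\<Union>i<k. {{h, P i ! j} | j. j < length (P i) \<and> even j})
            \<union> (\<Union>i<k. {{last (P i), hd (P ((i + 1) mod k))}}))"

end

theory Submission
  imports Defs
begin

lemma pm_empty: "perfect_matching_on E {} {}"
  by (simp add: perfect_matching_on_def)

lemma pm_edge: "{x,y} \<in> E \<Longrightarrow> perfect_matching_on E {x,y} {{x,y}}"
  by (auto simp: perfect_matching_on_def)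

lemma pm_union:
  assumes "perfect_matching_on E W1 M1" "perfect_matching_on E W2 M2" "W1 \<inter> W2 = {}"
  shows "perfect_matching_on E (W1 \<union> W2) (M1 \<union> M2)"
proof -
  have a: "M1 \<subseteq> E" "\<forall>e\<in>M1. e \<subseteq> W1" "\<forall>w\<in>W1. \<exists>!e. e \<in> M1 \<and> w \<in> e"
    using assms(1) by (auto simp: perfect_matching_on_def)
  have b: "M2 \<subseteq> E" "\<forall>e\<in>M2. e \<subseteq> W2" "\<forall>w\<in>W2. \<exists>!e. e \<in> M2 \<and> w \<in> e"
    using assms(2) by (auto simp: perfect_matching_on_def)
  have "\<exists>!e. e \<in> M1 \<union> M2 \<and> w \<in> e" if w: "w \<in> W1 \<union> W2" for w
  proof (cases "w \<in> W1")
    case True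
    then have "w \<notin> W2" using assms(3) by blast
    then have "\<forall>e\<in>M2. w \<notin> e" using b(2) by blast
    then show ?thesis using a(3) True by blast
  next
    case False
    then have "w \<in> W2" using w by blast
    have "\<forall>e\<in>M1. w \<notin> e" using a(2) False by blast
    then show ?thesis using b(3) \<open>w \<in> W2\<close> by blast
  qed
  moreover have "M1 \<union> M2 \<subseteq> E" using a(1) b(1) by blast
  moreover have "\<forall>e\<in>M1 \<union> M2. e \<subseteq> W1 \<union> W2" using a(2) b(2) by blast
  ultimately show ?thesis unfolding perfect_matching_on_def by blast
qed

lemma pm_arc:
  fixes g :: "nat \<Rightarrow> 'a"
  assumes "inj_on g {u..<u+2*c}" "\<And>t. {g t, g (Suc t)} \<in> E"
  shows "perfect_matching_on E (g ` {u..<u+2*c}) ((\<lambda>i. {g (u+2*i), g (Suc (u+2*i))}) ` {..<c})"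
  using assms(1)
proof (induction c)
  case 0
  then show ?case by (simp add: pm_empty)
next
  case (Suc c)
  have inj: "inj_on g {u..<u+2*c}" using Suc.prems by (rule inj_on_subset) auto
  note IH = Suc.IH[OF inj]
  have s1: "g ` {u..<u+2*Suc c} = g ` {u..<u+2*c} \<union> {g (u+2*c), g (Suc (u+2*c))}"
  proof -
    have "{u..<u+2*Suc c} = {u..<u+2*c} \<union> {u+2*c, Suc (u+2*c)}" by auto
    then show ?thesis by auto
  qed
  have s2: "(\<lambda>i. {g (u+2*i), g (Suc (u+2*i))}) ` {..<Suc c} =
     (\<lambda>i. {g (u+2*i), g (Suc (u+2*i))}) ` {..<c} \<union> {{g (u+2*c), g (Suc (u+2*c))}}"
    by (auto simp: lessThan_Suc)
  have d: "g ` {u..<u+2*c} \<inter> {g (u+2*c), g (Suc (u+2*c))} = {}"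
  proof -
    have "g (u+2*c) \<notin> g ` {u..<u+2*c}"
    proof
      assume "g (u+2*c) \<in> g ` {u..<u+2*c}"
      then obtain x where "x \<in> {u..<u+2*c}" "g (u+2*c) = g x" by blast
      then show False using inj_onD[OF Suc.prems, of "u+2*c" x] by auto
    qed
    moreover have "g (Suc (u+2*c)) \<notin> g ` {u..<u+2*c}"
    proof
      assume "g (Suc (u+2*c)) \<in> g ` {u..<u+2*c}"
      then obtain x where "x \<in> {u..<u+2*c}" "g (Suc (u+2*c)) = g x" by blast
      then show False using inj_onD[OF Suc.prems, of "Suc (u+2*c)" x] by auto
    qed
    ultimately show ?thesis by simp
  qed
  have e: "perfect_matching_on E {g (u+2*c), g (Suc (u+2*c))} {{g (u+2*c), g (Suc (u+2*c))}}"
    using pm_edge assms(2) by metis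
  have "perfect_matching_on E (g ` {u..<u+2*c} \<union> {g (u+2*c), g (Suc (u+2*c))})
     ((\<lambda>i. {g (u+2*i), g (Suc (u+2*i))}) ` {..<c} \<union> {{g (u+2*c), g (Suc (u+2*c))}})"
    using pm_union[OF IH e d] .
  then show ?case by (simp only: s1 s2)
qed

lemma mod_pm_neq:
  fixes N x :: int
  assumes "N \<ge> 3"
  shows "(x + 1) mod N \<noteq> (x - 1) mod N"
proof
  assume "(x + 1) mod N = (x - 1) mod N"
  then have "N dvd (x + 1) - (x - 1)" using mod_eq_dvd_iff by blast
  then have "N dvd 2" by simp
  then have "N \<le> 2" by (simp add: zdvd_imp_le)
  then show False using assms by simp
qed

lemma walk:
  fixes q :: "nat \<Rightarrow> int" and N :: int
  assumes N3: "N \<ge> 3"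
    and rng: "\<forall>j<m. 0 \<le> q j \<and> q j < N"
    and inj: "inj_on q {..<m}"
    and step: "\<forall>j. Suc j < m \<longrightarrow> q (Suc j) = (q j + 1) mod N \<or> q (Suc j) = (q j - 1) mod N"
  shows "\<exists>d. (d = 1 \<or> d = -1) \<and> (\<forall>j<m. q j = (q 0 + d * int j) mod N)"
proof (cases "m \<le> 1")
  case True
  have "\<forall>j<m. q j = (q 0 + 1 * int j) mod N"
  proof (intro allI impI)
    fix j assume "j < m"
    then have "j = 0" using True by simp
    then show "q j = (q 0 + 1 * int j) mod N" using rng \<open>j < m\<close> by simp
  qed
  then show ?thesis by blast
next
  case False
  have s0: "q 1 = (q 0 + 1) mod N \<or> q 1 = (q 0 + (-1)) mod N"
    using step[rule_format, of 0] False by simp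
  then obtain d where d: "d = 1 \<or> d = -1" "q 1 = (q 0 + d) mod N" by blast
  have main: "\<forall>i\<le>j. q i = (q 0 + d * int i) mod N" if "j < m" for j
    using that
  proof (induction j)
    case 0
    then have "0 \<le> q 0" "q 0 < N" using rng by auto
    then show ?case by simp
  next
    case (Suc j)
    then have IH: "\<forall>i\<le>j. q i = (q 0 + d * int i) mod N" using Suc_lessD by blast
    have qj: "q j = (q 0 + d * int j) mod N" using IH by blast
    have st: "q (Suc j) = (q j + d) mod N \<or> q (Suc j) = (q j - d) mod N"
    proof -
      have "q (Suc j) = (q j + 1) mod N \<or> q (Suc j) = (q j - 1) mod N"
        using step Suc.prems by blast
      then show ?thesis using d(1) by fastforce
    qed
    have new: "q (Suc j) = (q 0 + d * int (Suc j)) mod N"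
    proof (cases "q (Suc j) = (q j + d) mod N")
      case True
      then have "q (Suc j) = ((q 0 + d * int j) mod N + d) mod N" using qj by argo
      also have "\<dots> = (q 0 + d * int (Suc j)) mod N" by (simp add: mod_simps algebra_simps)
      finally show ?thesis .
    next
      case F: False
      then have qs: "q (Suc j) = (q j - d) mod N" using st by blast
      have sj: "Suc j < m" using Suc.prems .
      show ?thesis
      proof (cases "j = 0")
        case True
        then have "(q 0 + d) mod N = (q 0 - d) mod N" using qs d(2) by simp
        then have False using d(1) mod_pm_neq[OF N3, of "q 0"] by auto
        then show ?thesis ..
      next
        case False
        then obtain j' where j': "j = Suc j'" using not0_implies_Suc by blast
        have "j' \<le> j" using j' by simp
        then have qj': "q j' = (q 0 + d * int j') mod N" using IH by blast
        have "q (Suc (Suc j')) = ((q 0 + d * int (Suc j')) mod N - d) mod N"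
          using qs qj j' by simp
        also have "\<dots> = (q 0 + d * int j') mod N" by (simp add: mod_simps algebra_simps)
        finally have "q (Suc (Suc j')) = q j'" using qj' by argo
        moreover have "Suc (Suc j') < m" using sj j' by simp
        ultimately have "Suc (Suc j') = j'" using inj unfolding inj_on_def by simp
        then show ?thesis by simp
      qed
    qed
    show ?case
    proof (intro allI impI)
      fix i assume "i \<le> Suc j"
      then have "i \<le> j \<or> i = Suc j" by auto
      then show "q i = (q 0 + d * int i) mod N" using IH new by blast
    qed
  qed
  show ?thesis using d(1) main by blast
qed

lemma rtranclp_sym_rel:
  assumes sym: "\<And>x y. r x y \<Longrightarrow> r y x" and "r\<^sup>*\<^sup>* x y"
  shows "r\<^sup>*\<^sup>* y x"
  using assms(2)
proof (induction rule: rtranclp_induct)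
  case base then show ?case by simp
next
  case (step y z)
  then show ?case using sym by (meson converse_rtranclp_into_rtranclp)
qed

lemma even_cycle_rotate:
  assumes "even_cycle V E cs" "i0 < length cs"
  shows "even_cycle V E (rotate i0 cs)"
proof -
  let ?L = "length cs"
  have c: "distinct cs" "length cs \<ge> 3" "even (length cs)" "set cs \<subseteq> V"
    "\<forall>i < length cs. {cs ! i, cs ! ((i + 1) mod length cs)} \<in> E"
    using assms(1) by (auto simp: even_cycle_def)
  have "{rotate i0 cs ! i, rotate i0 cs ! ((i + 1) mod ?L)} \<in> E" if "i < ?L" for i
  proof -
    have L0: "?L > 0" using that by (cases cs) auto
    have ne: "cs \<noteq> []" using that by (cases cs) auto
    have a: "rotate i0 cs ! i = cs ! ((i0 + i) mod ?L)" using that by (rule nth_rotate)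
    have b: "rotate i0 cs ! ((i + 1) mod ?L) = cs ! ((i0 + (i + 1) mod ?L) mod ?L)"
      using L0 by (intro nth_rotate) simp
    have "(i0 + (i + 1) mod ?L) mod ?L = ((i0 + i) mod ?L + 1) mod ?L"
      by (simp add: mod_simps algebra_simps)
    moreover have "(i0 + i) mod ?L < ?L" using L0 by simp
    ultimately show ?thesis using a b c(5) by metis
  qed
  then show ?thesis using c by (simp add: even_cycle_def)
qed

locale absw =
  fixes f :: "int \<Rightarrow> 'a" and N :: nat and h :: 'a and A :: "int set" and V :: "'a set" and E :: "'a set set"
  assumes N3: "N \<ge> 3" and oddN: "odd N"
    and per: "\<And>x. f x = f (x mod int N)"
    and injf: "inj_on f {0..<int N}"
    and hn: "h \<notin> f ` {0..<int N}"
    and Vdef: "V = insert h (f ` {0..<int N})"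
    and Edef: "E = {{f p, f (p+1)} | p. True} \<union> {{h, f a} | a. a \<in> A}"
    and Acond: "\<And>p. \<exists>a\<in>A. odd ((p - a) mod int N)"
begin

lemma Npos: "int N > 0" using N3 by simp

lemma f_eq_iff: "f x = f y \<longleftrightarrow> x mod int N = y mod int N"
proof
  assume "f x = f y"
  then have "f (x mod int N) = f (y mod int N)" using per by metis
  moreover have "x mod int N \<in> {0..<int N}" "y mod int N \<in> {0..<int N}" using Npos by auto
  ultimately show "x mod int N = y mod int N" using injf by (auto dest: inj_onD)
next
  assume "x mod int N = y mod int N"
  then show "f x = f y" using per by metis
qed

lemma f_in: "f x \<in> f ` {0..<int N}"
proof -
  have "x mod int N \<in> {0..<int N}" using Npos by auto
  then show ?thesis using per[of x] by blast
qed

lemma h_neq: "h \<noteq> f x" using hn f_in by metis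

lemma rim_edge: "{f p, f (p+1)} \<in> E" using Edef by blast

lemma hub_edge: "a \<in> A \<Longrightarrow> {h, f a} \<in> E" using Edef by blast

lemma edge_cases: "e \<in> E \<Longrightarrow> (\<exists>p. e = {f p, f (p+1)}) \<or> (\<exists>a\<in>A. e = {h, f a})"
  using Edef by blast

lemma rim_rel:
  assumes "{f x, f y} \<in> E"
  shows "y mod int N = (x + 1) mod int N \<or> y mod int N = (x - 1) mod int N"
proof -
  have "\<not> (\<exists>a\<in>A. {f x, f y} = {h, f a})" using h_neq by (metis insertCI insertE singletonD)
  then obtain p where p: "{f x, f y} = {f p, f (p+1)}" using edge_cases[OF assms] by blast
  then have "(f x = f p \<and> f y = f (p+1)) \<or> (f x = f (p+1) \<and> f y = f p)"
    by (simp add: doubleton_eq_iff)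
  then show ?thesis
  proof
    assume "f x = f p \<and> f y = f (p+1)"
    then have "x mod int N = p mod int N" "y mod int N = (p+1) mod int N" using f_eq_iff by auto
    then have "y mod int N = (x + 1) mod int N" by (metis mod_add_left_eq)
    then show ?thesis ..
  next
    assume "f x = f (p+1) \<and> f y = f p"
    then have "x mod int N = (p+1) mod int N" "y mod int N = p mod int N" using f_eq_iff by auto
    then have "y mod int N = (x - 1) mod int N" by (metis add_diff_cancel_right' mod_diff_left_eq)
    then show ?thesis ..
  qed
qed

definition g :: "int \<Rightarrow> nat \<Rightarrow> 'a" where "g s t = f (s + int t)"

lemma g_inj: "inj_on (g s) {..<N}"
proof
  fix t1 t2 assume t: "t1 \<in> {..<N}" "t2 \<in> {..<N}" and eq: "g s t1 = g s t2"
  then have "(s + int t1) mod int N = (s + int t2) mod int N" using f_eq_iff g_def by simp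
  then have d: "int N dvd (s + int t1) - (s + int t2)" using mod_eq_dvd_iff by blast
  show "t1 = t2"
  proof (rule ccontr)
    assume "t1 \<noteq> t2"
    then have "int t1 - int t2 \<noteq> 0" by simp
    moreover have "int N dvd int t1 - int t2" using d by simp
    ultimately have "\<bar>int N\<bar> \<le> \<bar>int t1 - int t2\<bar>" by (rule dvd_imp_le_int)
    then show False using t by auto
  qed
qed

lemma g_img: "g s ` {..<N} = f ` {0..<int N}"
proof
  show "g s ` {..<N} \<subseteq> f ` {0..<int N}" using f_in g_def by auto
next
  show "f ` {0..<int N} \<subseteq> g s ` {..<N}"
  proof
    fix y assume "y \<in> f ` {0..<int N}"
    then obtain x where x: "x \<in> {0..<int N}" "y = f x" by blast
    define t where "t = nat ((x - s) mod int N)"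
    have t0: "int t = (x - s) mod int N" using Npos t_def by simp
    have "t < N" using Npos t_def by (simp add: nat_less_iff)
    moreover have "g s t = y"
    proof -
      have "(s + int t) mod int N = x mod int N" using t0 by (simp add: mod_simps)
      then show ?thesis using x f_eq_iff g_def by simp
    qed
    ultimately show "y \<in> g s ` {..<N}" by blast
  qed
qed

lemma g_edge: "{g s t, g s (Suc t)} \<in> E"
proof -
  have "s + int (Suc t) = s + int t + 1" by simp
  then show ?thesis using rim_edge[of "s + int t"] unfolding g_def by metis
qed

end

context absw begin

lemma finV: "finite V" using Vdef by simp

lemma f_in_V: "f x \<in> V" using Vdef f_in by blast

lemma simple: "simple_graph V E"
proof -
  have "\<exists>u v. e = {u, v} \<and> u \<noteq> v \<and> u \<in> V \<and> v \<in> V" if e: "e \<in> E" for e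
  proof -
    from edge_cases[OF e] show ?thesis
    proof
      assume "\<exists>p. e = {f p, f (p+1)}"
      then obtain p where p: "e = {f p, f (p+1)}" by blast
      have "f p \<noteq> f (p+1)"
      proof
        assume "f p = f (p+1)"
        then have "p mod int N = (p+1) mod int N" using f_eq_iff by blast
        then have "int N dvd p - (p+1)" using mod_eq_dvd_iff by blast
        then have "int N dvd 1" by (metis dvd_minus_iff minus_diff_eq add_diff_cancel_left')
        then show False using N3 by simp
      qed
      then show ?thesis using p f_in_V by blast
    next
      assume "\<exists>a\<in>A. e = {h, f a}"
      then obtain a where "e = {h, f a}" by blast
      moreover have "h \<in> V" using Vdef by simp
      ultimately show ?thesis using h_neq f_in_V by blast
    qed
  qed
  then show ?thesis using finV unfolding simple_graph_def by blast
qed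

lemma connected: "connected_graph V E"
proof -
  let ?r = "\<lambda>x y. {x, y} \<in> E"
  have sym: "?r x y \<Longrightarrow> ?r y x" for x y by (simp add: insert_commute)
  have fn: "?r\<^sup>*\<^sup>* (f 0) (f (int n))" for n
  proof (induction n)
    case 0 then show ?case by simp
  next
    case (Suc n)
    have "?r (f (int n)) (f (int n + 1))" by (rule rim_edge)
    moreover have "int (Suc n) = int n + 1" by simp
    ultimately have "?r (f (int n)) (f (int (Suc n)))" by metis
    then show ?case using Suc.IH by (meson rtranclp.rtrancl_into_rtrancl)
  qed
  have fx: "?r\<^sup>*\<^sup>* (f 0) (f x)" for x
  proof -
    have "x mod int N \<ge> 0" using Npos by simp
    then obtain n where "x mod int N = int n" using nonneg_int_cases by blast
    then have "f x = f (int n)" using per by metis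
    then show ?thesis using fn by simp
  qed
  obtain a where a: "a \<in> A" using Acond by blast
  have "?r (f a) h" using hub_edge[OF a] by (simp add: insert_commute)
  then have hr: "?r\<^sup>*\<^sup>* (f 0) h" using fx[of a] by (meson rtranclp.rtrancl_into_rtrancl)
  have all: "?r\<^sup>*\<^sup>* (f 0) v" if "v \<in> V" for v
    using that Vdef hr fx by auto
  show ?thesis unfolding connected_graph_def
  proof (intro ballI)
    fix u v assume "u \<in> V" "v \<in> V"
    have "?r\<^sup>*\<^sup>* u (f 0)" using all[OF \<open>u \<in> V\<close>] rtranclp_sym_rel[of ?r] sym by blast
    then show "?r\<^sup>*\<^sup>* u v" using all[OF \<open>v \<in> V\<close>] by (rule rtranclp_trans)
  qed
qed

lemma cardV: "card V \<ge> 2"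
proof -
  have "{h, f 0} \<subseteq> V" using Vdef f_in_V by blast
  moreover have "card {h, f 0} = 2" using h_neq by simp
  ultimately show ?thesis using finV by (metis card_mono)
qed

definition Ma :: "int \<Rightarrow> 'a set set" where
  "Ma a = {{h, f a}} \<union> (\<lambda>i. {g a (1+2*i), g a (Suc (1+2*i))}) ` {..<(N - 1) div 2}"

lemma Ma_pm:
  assumes a: "a \<in> A"
  shows "perfect_matching_on E V (Ma a)"
proof -
  let ?c = "(N - 1) div 2"
  have c: "1 + 2 * ?c = N"
  proof -
    obtain n where "N = 2*n+1" using oddN by (rule oddE)
    then show ?thesis by simp
  qed
  have inj1: "inj_on (g a) {1..<1+2*?c}" using g_inj by (rule inj_on_subset) (use c in auto)
  have pa: "perfect_matching_on E (g a ` {1..<1+2*?c}) ((\<lambda>i. {g a (1+2*i), g a (Suc (1+2*i))}) ` {..<?c})"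
    by (rule pm_arc[OF inj1 g_edge])
  have ph: "perfect_matching_on E {h, f a} {{h, f a}}" by (rule pm_edge[OF hub_edge[OF a]])
  have ga0: "g a 0 = f a" by (simp add: g_def)
  have split: "g a ` {..<N} = insert (g a 0) (g a ` {1..<N})"
  proof -
    have "{..<N} = insert 0 {1..<N}" using N3 by auto
    then show ?thesis by simp
  qed
  have notin: "g a 0 \<notin> g a ` {1..<N}"
  proof
    assume "g a 0 \<in> g a ` {1..<N}"
    then obtain t where "t \<in> {1..<N}" "g a 0 = g a t" by blast
    then show False using inj_onD[OF g_inj, of a 0 t] N3 by auto
  qed
  have disj: "{h, f a} \<inter> g a ` {1..<1+2*?c} = {}"
    using notin ga0 c h_neq unfolding g_def by auto
  have "V = {h, f a} \<union> g a ` {1..<1+2*?c}"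
    using Vdef g_img[of a] split ga0 c by auto
  then show ?thesis using pm_union[OF ph pa disj] unfolding Ma_def by simp
qed

lemma edge_in_pm: "e \<in> E \<Longrightarrow> \<exists>M. perfect_matching_on E V M \<and> e \<in> M"
proof -
  assume e: "e \<in> E"
  from edge_cases[OF e] show ?thesis
  proof
    assume "\<exists>a\<in>A. e = {h, f a}"
    then obtain a where "a \<in> A" "e = {h, f a}" by blast
    then show ?thesis using Ma_pm unfolding Ma_def by blast
  next
    assume "\<exists>p. e = {f p, f (p+1)}"
    then obtain p where p: "e = {f p, f (p+1)}" by blast
    obtain a where a: "a \<in> A" and od: "odd ((p - a) mod int N)" using Acond by blast
    define r where "r = (p - a) mod int N"
    have r0: "0 \<le> r" "r < int N" using Npos r_def by auto
    obtain k where k: "r = 2 * k + 1" using od r_def by (metis oddE)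
    have k0: "k \<ge> 0" using r0 k by simp
    have "r \<noteq> int N - 1"
    proof
      assume "r = int N - 1"
      then have "even r" using oddN by simp
      then show False using od r_def by simp
    qed
    then have rle: "r \<le> int N - 2" using r0 k oddN by presburger
    define i where "i = nat k"
    have ik: "int i = k" using k0 i_def by simp
    have "i < (N - 1) div 2" using rle k ik N3 by linarith
    moreover have "{g a (1+2*i), g a (Suc (1+2*i))} = e"
    proof -
      have m: "(a + r) mod int N = p mod int N" using r_def by (simp add: mod_simps)
      have "g a (1+2*i) = f (a + r)" using ik k by (simp add: g_def algebra_simps)
      also have "\<dots> = f p" using m f_eq_iff by blast
      finally have 1: "g a (1+2*i) = f p" .
      have "g a (Suc (1+2*i)) = f (a + r + 1)" using ik k by (simp add: g_def algebra_simps)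
      also have "\<dots> = f (p + 1)" using m f_eq_iff by (metis mod_add_left_eq)
      finally have 2: "g a (Suc (1+2*i)) = f (p+1)" .
      show ?thesis using 1 2 p by simp
    qed
    ultimately have "e \<in> Ma a" unfolding Ma_def by blast
    then show ?thesis using Ma_pm[OF a] by blast
  qed
qed

lemma matching_covered: "matching_covered V E"
  using simple connected cardV edge_in_pm unfolding matching_covered_def by blast

end

context absw begin

lemma seq:
  assumes dist: "distinct cs" and len: "ofs + m \<le> length cs"
    and inr: "\<forall>j<m. cs ! (ofs + j) \<in> f ` {0..<int N}"
    and adj: "\<forall>j. Suc j < m \<longrightarrow> {cs ! (ofs + j), cs ! (ofs + Suc j)} \<in> E"
  shows "\<exists>q d. (d = 1 \<or> d = -1) \<and> (\<forall>j<m. 0 \<le> q j \<and> q j < int N \<and> f (q j) = cs ! (ofs + j))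
     \<and> (\<forall>j<m. q j = (q 0 + d * int j) mod int N) \<and> m \<le> N"
proof -
  define q where "q j = (SOME x. x \<in> {0..<int N} \<and> f x = cs ! (ofs + j))" for j
  have qp: "q j \<in> {0..<int N} \<and> f (q j) = cs ! (ofs + j)" if "j < m" for j
  proof -
    have "\<exists>x. x \<in> {0..<int N} \<and> f x = cs ! (ofs + j)" using inr that by force
    then show ?thesis unfolding q_def by (rule someI_ex)
  qed
  have rng: "\<forall>j<m. 0 \<le> q j \<and> q j < int N" using qp by auto
  have inj: "inj_on q {..<m}"
  proof
    fix j1 j2 assume j: "j1 \<in> {..<m}" "j2 \<in> {..<m}" and e: "q j1 = q j2"
    then have "cs ! (ofs + j1) = cs ! (ofs + j2)" using qp by (metis lessThan_iff)
    moreover have "ofs + j1 < length cs" "ofs + j2 < length cs" using j len by auto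
    ultimately show "j1 = j2" using dist nth_eq_iff_index_eq by fastforce
  qed
  have step: "\<forall>j. Suc j < m \<longrightarrow> q (Suc j) = (q j + 1) mod int N \<or> q (Suc j) = (q j - 1) mod int N"
  proof (intro allI impI)
    fix j assume j: "Suc j < m"
    then have "{f (q j), f (q (Suc j))} \<in> E" using adj qp by (metis Suc_lessD)
    then have "q (Suc j) mod int N = (q j + 1) mod int N \<or> q (Suc j) mod int N = (q j - 1) mod int N"
      by (rule rim_rel)
    moreover have "q (Suc j) mod int N = q (Suc j)" using qp[OF j] by simp
    ultimately show "q (Suc j) = (q j + 1) mod int N \<or> q (Suc j) = (q j - 1) mod int N" by simp
  qed
  have N3': "int N \<ge> 3" using N3 by simp
  obtain d where d: "d = 1 \<or> d = -1" "\<forall>j<m. q j = (q 0 + d * int j) mod int N"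
    using walk[OF N3' rng inj step] by blast
  have "card {..<m} \<le> card {0..<int N}"
    by (rule card_inj_on_le[OF inj]) (use rng in auto)
  then have "m \<le> N" by simp
  moreover have qp': "\<forall>j<m. 0 \<le> q j \<and> q j < int N \<and> f (q j) = cs ! (ofs + j)"
    using qp by auto
  ultimately show ?thesis using d by (intro exI[of _ q] exI[of _ d]) blast
qed

lemma no_hub:
  assumes cyc: "even_cycle V E cs" and nh: "h \<notin> set cs"
  shows False
proof -
  let ?L = "length cs"
  have c: "distinct cs" "?L \<ge> 3" "even ?L" "set cs \<subseteq> V"
    "\<forall>i < ?L. {cs ! i, cs ! ((i + 1) mod ?L)} \<in> E"
    using cyc by (auto simp: even_cycle_def)
  have inr: "\<forall>j<?L. cs ! (0 + j) \<in> f ` {0..<int N}"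
    using c(4) nh Vdef by (metis add_0 insertE nth_mem subsetD)
  have adj: "\<forall>j. Suc j < ?L \<longrightarrow> {cs ! (0 + j), cs ! (0 + Suc j)} \<in> E"
    using c(5) by (metis Suc_eq_plus1 Suc_lessD add_0 mod_less)
  have len0: "0 + ?L \<le> ?L" by simp
  obtain q d where d: "d = 1 \<or> d = -1"
    and qp: "\<forall>j<?L. 0 \<le> q j \<and> q j < int N \<and> f (q j) = cs ! (0 + j)"
    and qd: "\<forall>j<?L. q j = (q 0 + d * int j) mod int N" and LN: "?L \<le> N"
    using seq[OF c(1) len0 inr adj] by blast
  have l1: "?L - 1 < ?L" "0 < ?L" using c(2) by auto
  have "((?L - 1) + 1) mod ?L = 0"
  proof -
    have "?L - 1 + 1 = ?L" using c(2) by simp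
    then show ?thesis by simp
  qed
  then have "{cs ! (?L - 1), cs ! 0} \<in> E" using c(5) l1 by metis
  then have "{f (q (?L - 1)), f (q 0)} \<in> E" using qp l1 by simp
  then have "q 0 mod int N = (q (?L - 1) + 1) mod int N \<or> q 0 mod int N = (q (?L - 1) - 1) mod int N"
    by (rule rim_rel)
  moreover have "q (?L - 1) = (q 0 + d * int (?L - 1)) mod int N" using qd l1 by blast
  ultimately obtain e where e: "e = 1 \<or> e = -1"
    "q 0 mod int N = (q 0 + d * int (?L - 1) + e) mod int N"
    by (metis diff_conv_add_uminus mod_add_left_eq)
  then have "int N dvd q 0 - (q 0 + d * int (?L - 1) + e)" using mod_eq_dvd_iff by blast
  moreover have eq: "q 0 - (q 0 + d * int (?L - 1) + e) = - (d * int (?L - 1) + e)" by simp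
  ultimately have dv: "int N dvd d * int (?L - 1) + e" by (simp only: eq dvd_minus_iff)
  have iL: "int (?L - 1) = int ?L - 1" using c(2) by (simp add: of_nat_diff)
  define X where "X = d * int (?L - 1) + e"
  have dX: "int N dvd X" using dv X_def by simp
  have X: "X = int ?L \<or> X = int ?L - 2 \<or> X = - (int ?L - 2) \<or> X = - int ?L"
    using d e(1) iL unfolding X_def by auto
  have "int N dvd int ?L \<or> int N dvd int ?L - 2"
    using X
  proof (elim disjE)
    assume "X = int ?L" then show ?thesis using dX by simp
  next
    assume "X = int ?L - 2" then show ?thesis using dX by simp
  next
    assume "X = - (int ?L - 2)" then have "int N dvd - (int ?L - 2)" using dX by (simp only:)
    then have "int N dvd int ?L - 2" by (simp only: dvd_minus_iff)
    then show ?thesis by (rule disjI2)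
  next
    assume "X = - int ?L" then show ?thesis using dX by simp
  qed
  then show False
  proof
    assume "int N dvd int ?L"
    then have "int N \<le> int ?L" using c(2) by (intro zdvd_imp_le) auto
    then have "N = ?L" using LN by simp
    then show False using c(3) oddN by simp
  next
    assume "int N dvd int ?L - 2"
    then have "int N \<le> int ?L - 2" using c(2) by (intro zdvd_imp_le) auto
    then show False using LN by simp
  qed
qed

end

context absw begin

lemma hub_case:
  assumes cyc: "even_cycle V E cs" and h0: "cs ! 0 = h"
  shows "has_perfect_matching_on E (V - set cs)"
proof -
  let ?L = "length cs"
  have c: "distinct cs" "?L \<ge> 3" "even ?L" "set cs \<subseteq> V"
    "\<forall>i < ?L. {cs ! i, cs ! ((i + 1) mod ?L)} \<in> E"
    using cyc by (auto simp: even_cycle_def)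
  have ne: "cs \<noteq> []" using c(2) by (cases cs) auto
  define m where "m = ?L - 1"
  have mL: "1 + m \<le> ?L" "1 + m = ?L" using c(2) m_def by auto
  have inr: "\<forall>j<m. cs ! (1 + j) \<in> f ` {0..<int N}"
  proof (intro allI impI)
    fix j assume j: "j < m"
    then have jl: "1 + j < ?L" using mL by simp
    then have "cs ! (1 + j) \<in> V" using c(4) nth_mem by blast
    moreover have "cs ! (1 + j) \<noteq> h"
    proof
      assume "cs ! (1 + j) = h"
      then have "cs ! (1 + j) = cs ! 0" using h0 by simp
      then show False using c(1) jl nth_eq_iff_index_eq by fastforce
    qed
    ultimately show "cs ! (1 + j) \<in> f ` {0..<int N}" using Vdef by blast
  qed
  have adj: "\<forall>j. Suc j < m \<longrightarrow> {cs ! (1 + j), cs ! (1 + Suc j)} \<in> E"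
  proof (intro allI impI)
    fix j assume j: "Suc j < m"
    then have "1 + j < ?L" "(1 + j + 1) mod ?L = 1 + Suc j" using mL by auto
    then show "{cs ! (1 + j), cs ! (1 + Suc j)} \<in> E" using c(5) by metis
  qed
  obtain q d where d: "d = 1 \<or> d = -1"
    and qp: "\<forall>j<m. 0 \<le> q j \<and> q j < int N \<and> f (q j) = cs ! (1 + j)"
    and qd: "\<forall>j<m. q j = (q 0 + d * int j) mod int N" and mN: "m \<le> N"
    using seq[OF c(1) mL(1) inr adj] by blast
  define s where "s = (if d = 1 then q 0 else q 0 - int (m - 1))"
  have csj: "cs ! (1 + j) = f (q 0 + d * int j)" if "j < m" for j
  proof -
    have "cs ! (1 + j) = f (q j)" using qp that by simp
    also have "\<dots> = f ((q 0 + d * int j) mod int N)"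
    proof -
      have "q j = (q 0 + d * int j) mod int N" using qd that by blast
      then show ?thesis by (simp only:)
    qed
    also have "\<dots> = f (q 0 + d * int j)" using per by metis
    finally show ?thesis .
  qed
  have R: "(\<lambda>j. cs ! (1 + j)) ` {..<m} = g s ` {..<m}"
  proof (cases "d = 1")
    case True
    then show ?thesis using csj by (auto simp: g_def s_def)
  next
    case False
    then have dm: "d = -1" using d by simp
    show ?thesis
    proof
      show "(\<lambda>j. cs ! (1 + j)) ` {..<m} \<subseteq> g s ` {..<m}"
      proof
        fix x assume "x \<in> (\<lambda>j. cs ! (1 + j)) ` {..<m}"
        then obtain j where j: "j < m" "x = cs ! (1 + j)" by blast
        have "g s (m - 1 - j) = f (q 0 - int (m - 1) + int (m - 1 - j))"
          using dm by (simp add: g_def s_def)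
        also have "q 0 - int (m - 1) + int (m - 1 - j) = q 0 + d * int j"
          using j dm by (simp add: of_nat_diff)
        finally have "g s (m - 1 - j) = x" using csj j by simp
        moreover have "m - 1 - j < m" using j by simp
        ultimately show "x \<in> g s ` {..<m}" by blast
      qed
    next
      show "g s ` {..<m} \<subseteq> (\<lambda>j. cs ! (1 + j)) ` {..<m}"
      proof
        fix x assume "x \<in> g s ` {..<m}"
        then obtain t where t: "t < m" "x = g s t" by blast
        have "x = f (q 0 - int (m - 1) + int t)"
          using dm t by (simp add: g_def s_def)
        also have "q 0 - int (m - 1) + int t = q 0 + d * int (m - 1 - t)"
          using t dm by (simp add: of_nat_diff)
        finally have "x = cs ! (1 + (m - 1 - t))" using csj t by simp
        moreover have "m - 1 - t < m" using t by simp
        ultimately show "x \<in> (\<lambda>j. cs ! (1 + j)) ` {..<m}" by blast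
      qed
    qed
  qed
  have setcs: "set cs = insert h (g s ` {..<m})"
  proof -
    have "set cs = {cs ! i | i. i < ?L}" by (simp add: set_conv_nth)
    also have "\<dots> = insert (cs ! 0) ((\<lambda>j. cs ! (1 + j)) ` {..<m})"
    proof
      show "{cs ! i | i. i < ?L} \<subseteq> insert (cs ! 0) ((\<lambda>j. cs ! (1 + j)) ` {..<m})"
      proof
        fix x assume "x \<in> {cs ! i | i. i < ?L}"
        then obtain i where i: "i < ?L" "x = cs ! i" by blast
        show "x \<in> insert (cs ! 0) ((\<lambda>j. cs ! (1 + j)) ` {..<m})"
        proof (cases i)
          case 0 then show ?thesis using i by simp
        next
          case (Suc j)
          then have "j < m" "x = cs ! (1 + j)" using i mL by auto
          then show ?thesis by blast
        qed
      qed
    next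
      show "insert (cs ! 0) ((\<lambda>j. cs ! (1 + j)) ` {..<m}) \<subseteq> {cs ! i | i. i < ?L}"
        using mL c(2) by force
    qed
    finally show ?thesis using h0 R by simp
  qed
  have hV: "h \<notin> g s ` {..<N}" using hn g_img by simp
  have "V - set cs = g s ` {..<N} - g s ` {..<m}"
    using Vdef setcs g_img[of s] hV by auto
  also have "\<dots> = g s ` ({..<N} - {..<m})"
    using mN by (intro inj_on_image_set_diff[OF g_inj, symmetric]) auto
  also have "{..<N} - {..<m} = {m..<m + 2 * ((N - m) div 2)}"
  proof -
    have "odd m" using c(3) c(2) m_def ne by simp
    then have "even (N - m)" using oddN mN by simp
    then have "m + 2 * ((N - m) div 2) = N" using mN by simp
    then show ?thesis by auto
  qed
  finally have W: "V - set cs = g s ` {m..<m + 2 * ((N - m) div 2)}" .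
  have "inj_on (g s) {m..<m + 2 * ((N - m) div 2)}"
    by (rule inj_on_subset[OF g_inj]) (use mN in auto)
  from pm_arc[OF this g_edge] show ?thesis
    unfolding W has_perfect_matching_on_def by blast
qed

lemma cycle_ext: "cycle_extendable V E"
  unfolding cycle_extendable_def
proof (intro conjI allI impI)
  show "matching_covered V E" by (rule matching_covered)
next
  fix cs assume cyc: "even_cycle V E cs"
  show "has_perfect_matching_on E (V - set cs)"
  proof (cases "h \<in> set cs")
    case False
    then show ?thesis using no_hub[OF cyc] by blast
  next
    case True
    then obtain i0 where i0: "i0 < length cs" "cs ! i0 = h" by (metis in_set_conv_nth)
    let ?cs = "rotate i0 cs"
    have c2: "even_cycle V E ?cs" using even_cycle_rotate[OF cyc i0(1)] .
    have "cs \<noteq> []" using i0 by (cases cs) auto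
    then have "?cs ! 0 = h" using i0 nth_rotate[where m=i0 and n=0 and xs=cs] by simp
    then have "has_perfect_matching_on E (V - set ?cs)" using hub_case[OF c2] by blast
    then show ?thesis by simp
  qed
qed

end

lemma parity_pair:
  fixes p a N :: int
  assumes "N > 0" "(p - a) mod N \<noteq> 0"
  shows "odd ((p - a) mod N) \<or> odd ((p - (a + 1)) mod N)"
proof -
  define r where "r = (p - a) mod N"
  have "0 \<le> r" "r < N" using assms r_def by auto
  then have r: "0 < r" "r < N" using assms(2) r_def by auto
  have "(p - (a + 1)) mod N = ((p - a) mod N - 1) mod N" by (simp add: mod_simps algebra_simps)
  also have "\<dots> = r - 1" using r r_def by simp
  finally have "(p - (a + 1)) mod N = r - 1" .
  then show ?thesis using r_def by auto
qed

locale wheel =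
  fixes k :: nat and h :: 'a and P :: "nat \<Rightarrow> 'a list"
  assumes oddk: "odd k" and k3: "k \<ge> 3"
    and Pp: "\<And>i. i < k \<Longrightarrow> odd (length (P i)) \<and> distinct (P i) \<and> h \<notin> set (P i)"
    and Pd: "\<And>i j. i < k \<Longrightarrow> j < k \<Longrightarrow> i \<noteq> j \<Longrightarrow> set (P i) \<inter> set (P j) = {}"
begin

definition off :: "nat \<Rightarrow> nat" where "off i = length (concat (map P [0..<i]))"
definition R :: "'a list" where "R = concat (map P [0..<k])"
definition NN :: nat where "NN = length R"

lemma off_0: "off 0 = 0" by (simp add: off_def)
lemma off_Suc: "off (Suc i) = off i + length (P i)" by (simp add: off_def)
lemma off_k: "off k = NN" by (simp add: off_def NN_def R_def)

lemma R_split: "i < k \<Longrightarrow> R = concat (map P [0..<i]) @ P i @ concat (map P [Suc i..<k])"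
proof -
  assume i: "i < k"
  have "[0..<k] = [0..<i] @ [i..<k]" using i by (metis le_add_diff_inverse less_imp_le upt_add_eq_append zero_le)
  moreover have "[i..<k] = i # [Suc i..<k]" using i by (simp add: upt_conv_Cons)
  ultimately show ?thesis unfolding R_def by simp
qed

lemma R_nth: "i < k \<Longrightarrow> j < length (P i) \<Longrightarrow> R ! (off i + j) = P i ! j"
  using R_split by (simp add: off_def nth_append)

lemma off_mono: "i \<le> j \<Longrightarrow> off i \<le> off j"
proof (induction j)
  case 0 then show ?case by simp
next
  case (Suc j) then show ?case by (auto simp: off_Suc le_Suc_eq)
qed

lemma decomp: "n < off m \<Longrightarrow> \<exists>i<m. \<exists>j<length (P i). n = off i + j"
proof (induction m)
  case 0 then show ?case by (simp add: off_0)
next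
  case (Suc m)
  show ?case
  proof (cases "n < off m")
    case True then show ?thesis using Suc.IH by (meson less_SucI)
  next
    case False
    then have "n - off m < length (P m)" "n = off m + (n - off m)" using Suc.prems by (auto simp: off_Suc)
    then show ?thesis by blast
  qed
qed

lemma len_pos: "i < k \<Longrightarrow> length (P i) \<ge> 1"
  using Pp[of i] by (cases "P i") auto

lemma off_ge: "m \<le> k \<Longrightarrow> off m \<ge> m"
proof (induction m)
  case 0 then show ?case by simp
next
  case (Suc m) then show ?case using len_pos[of m] by (simp add: off_Suc)
qed

lemma off_parity: "m \<le> k \<Longrightarrow> even (off m) = even m"
proof (induction m)
  case 0 then show ?case by (simp add: off_0)
next
  case (Suc m) then show ?case using Pp[of m] by (simp add: off_Suc)
qed

lemma NN3: "NN \<ge> 3" using off_ge[of k] k3 off_k by simp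
lemma oddNN: "odd NN" using off_parity[of k] oddk off_k by simp

lemma set_R: "set R = (\<Union>i<k. set (P i))"
  unfolding R_def by auto

lemma distinct_R: "distinct R"
proof -
  have "distinct (concat (map P [0..<m]))" if "m \<le> k" for m
    using that
  proof (induction m)
    case 0 then show ?case by simp
  next
    case (Suc m)
    have "set (concat (map P [0..<m])) \<inter> set (P m) = {}"
    proof -
      have "set (P i) \<inter> set (P m) = {}" if "i < m" for i
        using Pd[of i m] Suc.prems that by simp
      then show ?thesis by fastforce
    qed
    then show ?case using Suc Pp[of m] by simp
  qed
  then show ?thesis unfolding R_def by simp
qed

definition ff :: "int \<Rightarrow> 'a" where "ff x = R ! nat (x mod int NN)"
definition AA :: "int set" where
  "AA = {int (off i + j) | i j. i < k \<and> j < length (P i) \<and> even j}"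

lemma NNpos: "int NN > 0" using NN3 by simp

lemma ff_nat: "n < NN \<Longrightarrow> ff (int n) = R ! n"
  by (simp add: ff_def nat_mod_distrib)

lemma ff_NN: "ff (int NN) = R ! 0"
  by (simp add: ff_def)

lemma ff_img: "ff ` {0..<int NN} = set R"
proof
  show "ff ` {0..<int NN} \<subseteq> set R"
  proof
    fix y assume "y \<in> ff ` {0..<int NN}"
    then obtain x where x: "0 \<le> x" "x < int NN" "y = ff x" by auto
    then have "nat x < NN" by simp
    moreover have "y = R ! nat x" using x ff_nat[of "nat x"] by simp
    ultimately show "y \<in> set R" using NN_def by simp
  qed
next
  show "set R \<subseteq> ff ` {0..<int NN}"
  proof
    fix y assume "y \<in> set R"
    then obtain n where n: "n < NN" "y = R ! n" by (metis NN_def in_set_conv_nth)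
    then have "y = ff (int n)" using ff_nat by simp
    moreover have "int n \<in> {0..<int NN}" using n by simp
    ultimately show "y \<in> ff ` {0..<int NN}" by blast
  qed
qed

end

context wheel begin

lemma off_bound: "i < k \<Longrightarrow> j < length (P i) \<Longrightarrow> off i + j < NN"
proof -
  assume i: "i < k" and j: "j < length (P i)"
  have "off i + j < off (Suc i)" using j by (simp add: off_Suc)
  also have "off (Suc i) \<le> off k" using i by (intro off_mono) simp
  finally show ?thesis using off_k by simp
qed

lemma ff_off: "i < k \<Longrightarrow> j < length (P i) \<Longrightarrow> ff (int (off i + j)) = P i ! j"
proof -
  assume a: "i < k" "j < length (P i)"
  then have "off i + j < NN" by (rule off_bound)
  then have "ff (int (off i + j)) = R ! (off i + j)" by (rule ff_nat)
  also have "\<dots> = P i ! j" using a by (rule R_nth)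
  finally show ?thesis .
qed

lemma ff_per: "ff x = ff (x mod int NN)" by (simp add: ff_def)

lemma ff_last: "i < k \<Longrightarrow> ff (int (off i + (length (P i) - 1))) = last (P i)"
proof -
  assume i: "i < k"
  have ne: "P i \<noteq> []" using len_pos[OF i] by auto
  then show ?thesis using ff_off[OF i, of "length (P i) - 1"] by (simp add: last_conv_nth)
qed

lemma ff_hd: "i < k \<Longrightarrow> ff (int (off i + (length (P i) - 1)) + 1) = hd (P ((i + 1) mod k))"
proof -
  assume i: "i < k"
  have l: "length (P i) \<ge> 1" using len_pos[OF i] .
  have e: "int (off i + (length (P i) - 1)) + 1 = int (off (Suc i) + 0)"
    using l by (simp add: off_Suc)
  show ?thesis
  proof (cases "Suc i < k")
    case True
    have ne: "P (Suc i) \<noteq> []" using len_pos[OF True] by auto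
    have "0 < length (P (Suc i))" using ne by simp
    then have "ff (int (off (Suc i) + 0)) = P (Suc i) ! 0" by (rule ff_off[OF True])
    also have "\<dots> = hd (P (Suc i))" using ne by (simp add: hd_conv_nth)
    finally show ?thesis using e True by simp
  next
    case False
    then have ik: "Suc i = k" using i by simp
    have k0: "0 < k" using i by simp
    have ne: "P 0 \<noteq> []" using len_pos[OF k0] by auto
    have "ff (int (off (Suc i) + 0)) = ff (int NN)" using ik off_k by simp
    also have "\<dots> = R ! (off 0 + 0)" using ff_NN off_0 by simp
    also have "\<dots> = P 0 ! 0" using R_nth[OF k0, of 0] ne by simp
    also have "\<dots> = hd (P 0)" using ne by (simp add: hd_conv_nth)
    finally show ?thesis using e ik by simp
  qed
qed

lemma rim_eq: "{{ff p, ff (p+1)} | p. True} =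
   (\<Union>i<k. path_edges (P i)) \<union> (\<Union>i<k. {{last (P i), hd (P ((i + 1) mod k))}})"
proof
  show "{{ff p, ff (p+1)} | p. True} \<subseteq>
   (\<Union>i<k. path_edges (P i)) \<union> (\<Union>i<k. {{last (P i), hd (P ((i + 1) mod k))}})"
  proof
    fix e assume "e \<in> {{ff p, ff (p+1)} | p. True}"
    then obtain p where p: "e = {ff p, ff (p+1)}" by blast
    define n where "n = nat (p mod int NN)"
    have nN: "n < NN" "int n = p mod int NN" using NNpos n_def by (auto simp: nat_less_iff)
    have a: "ff p = ff (int n)" using nN(2) ff_per by metis
    have b: "ff (p + 1) = ff (int n + 1)"
    proof -
      have "(p + 1) mod int NN = (int n + 1) mod int NN" using nN(2) by (simp add: mod_simps)
      then show ?thesis using ff_per by metis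
    qed
    obtain i j where ij: "i < k" "j < length (P i)" "n = off i + j"
      using decomp[of n k] nN(1) off_k by auto
    show "e \<in> (\<Union>i<k. path_edges (P i)) \<union> (\<Union>i<k. {{last (P i), hd (P ((i + 1) mod k))}})"
    proof (cases "j + 1 < length (P i)")
      case True
      have "int n + 1 = int (off i + (j + 1))" using ij by simp
      then have "ff (int n + 1) = ff (int (off i + (j + 1)))" by (simp only:)
      also have "\<dots> = P i ! (j + 1)" using ff_off[OF ij(1) True] .
      finally have "e = {P i ! j, P i ! (j + 1)}" using p a b ff_off[OF ij(1) ij(2)] ij(3) by simp
      then have "e \<in> path_edges (P i)" using True unfolding path_edges_def by blast
      then show ?thesis using ij(1) by blast
    next
      case False
      then have jl: "j = length (P i) - 1" using ij by simp
      have "e = {last (P i), hd (P ((i + 1) mod k))}"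
        using p a b ij(3) jl ff_last[OF ij(1)] ff_hd[OF ij(1)] by simp
      then show ?thesis using ij(1) by blast
    qed
  qed
next
  show "(\<Union>i<k. path_edges (P i)) \<union> (\<Union>i<k. {{last (P i), hd (P ((i + 1) mod k))}})
     \<subseteq> {{ff p, ff (p+1)} | p. True}"
  proof
    fix e assume "e \<in> (\<Union>i<k. path_edges (P i)) \<union> (\<Union>i<k. {{last (P i), hd (P ((i + 1) mod k))}})"
    then consider (pe) i where "i < k" "e \<in> path_edges (P i)"
      | (ce) i where "i < k" "e = {last (P i), hd (P ((i + 1) mod k))}" by blast
    then show "e \<in> {{ff p, ff (p+1)} | p. True}"
    proof cases
      case pe
      then obtain j where j: "e = {P i ! j, P i ! (j + 1)}" "j + 1 < length (P i)"
        unfolding path_edges_def by blast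
      have "ff (int (off i + j)) = P i ! j" using ff_off[OF pe(1)] j(2) by simp
      moreover have "ff (int (off i + j) + 1) = P i ! (j + 1)"
      proof -
        have "int (off i + j) + 1 = int (off i + (j + 1))" by simp
        then show ?thesis using ff_off[OF pe(1) j(2)] by (simp only:)
      qed
      ultimately have "e = {ff (int (off i + j)), ff (int (off i + j) + 1)}" using j by simp
      then show ?thesis by blast
    next
      case ce
      then have "e = {ff (int (off i + (length (P i) - 1))), ff (int (off i + (length (P i) - 1)) + 1)}"
        using ff_last ff_hd by simp
      then show ?thesis by blast
    qed
  qed
qed

lemma hub_eq: "{{h, ff a} | a. a \<in> AA} = (\<Union>i<k. {{h, P i ! j} | j. j < length (P i) \<and> even j})"
proof
  show "{{h, ff a} | a. a \<in> AA} \<subseteq> (\<Union>i<k. {{h, P i ! j} | j. j < length (P i) \<and> even j})"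
    using ff_off unfolding AA_def by fastforce
next
  show "(\<Union>i<k. {{h, P i ! j} | j. j < length (P i) \<and> even j}) \<subseteq> {{h, ff a} | a. a \<in> AA}"
  proof
    fix e assume "e \<in> (\<Union>i<k. {{h, P i ! j} | j. j < length (P i) \<and> even j})"
    then obtain i j where ij: "i < k" "j < length (P i)" "even j" "e = {h, P i ! j}" by blast
    then have "e = {h, ff (int (off i + j))}" using ff_off by simp
    moreover have "int (off i + j) \<in> AA" using ij unfolding AA_def by blast
    ultimately show "e \<in> {{h, ff a} | a. a \<in> AA}" by blast
  qed
qed

lemma A_cond: "\<exists>a\<in>AA. odd ((p - a) mod int NN)"
proof -
  have k0: "0 < k" "1 < k" "2 < k" using k3 by auto
  define a1 where "a1 = int (off 0 + (length (P 0) - 1))"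
  define a2 where "a2 = int (off 1 + (length (P 1) - 1))"
  have l0: "length (P 0) \<ge> 1" "odd (length (P 0))" using len_pos[OF k0(1)] Pp[OF k0(1)] by auto
  have l1: "length (P 1) \<ge> 1" "odd (length (P 1))" using len_pos[OF k0(2)] Pp[OF k0(2)] by auto
  have a1A: "a1 \<in> AA" using l0 k0 unfolding a1_def AA_def by fastforce
  have a2A: "a2 \<in> AA" using l1 k0 unfolding a2_def AA_def by fastforce
  have a1A': "a1 + 1 \<in> AA"
  proof -
    have "a1 + 1 = int (off 1 + 0)" using l0 by (simp add: a1_def off_Suc[of 0, simplified] off_0)
    moreover have "length (P 1) > 0" using l1 by linarith
    ultimately show ?thesis using k0 unfolding AA_def by fastforce
  qed
  have a2A': "a2 + 1 \<in> AA"
  proof -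
    have "a2 + 1 = int (off 2 + 0)" using l1 by (simp add: a2_def off_Suc[of 1, simplified] numeral_2_eq_2)
    moreover have "length (P 2) > 0" using len_pos[OF k0(3)] by linarith
    ultimately show ?thesis using k0 unfolding AA_def by fastforce
  qed
  have "off 0 + (length (P 0) - 1) < NN" using off_bound[OF k0(1), of "length (P 0) - 1"] l0 by simp
  then have b1: "0 \<le> a1" "a1 < int NN" unfolding a1_def by (simp_all only: of_nat_less_iff of_nat_0_le_iff)
  have "off 1 + (length (P 1) - 1) < NN" using off_bound[OF k0(2), of "length (P 1) - 1"] l1 by simp
  then have b2: "0 \<le> a2" "a2 < int NN" unfolding a2_def by (simp_all only: of_nat_less_iff of_nat_0_le_iff)
  have "a1 < a2"
  proof -
    have "off 1 = length (P 0)" using off_Suc[of 0] off_0 by simp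
    then have e2: "a2 = int (length (P 0)) + int (length (P 1)) - 1" using l1 a2_def by simp
    have e1: "a1 = int (length (P 0)) - 1" using l0 off_0 a1_def by simp
    have "int (length (P 1)) \<ge> 1" using l1 by simp
    then show ?thesis using e1 e2 by linarith
  qed
  then obtain a where a: "a \<in> AA" "a + 1 \<in> AA" "p mod int NN \<noteq> a" "0 \<le> a" "a < int NN"
    using a1A a1A' a2A a2A' b1 b2 by (metis order_less_irrefl)
  have "(p - a) mod int NN \<noteq> 0"
  proof
    assume "(p - a) mod int NN = 0"
    then have "p mod int NN = a mod int NN" by (simp add: mod_eq_dvd_iff dvd_eq_mod_eq_0)
    then show False using a by simp
  qed
  then have "odd ((p - a) mod int NN) \<or> odd ((p - (a + 1)) mod int NN)"
    using parity_pair NNpos by blast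
  then show ?thesis using a by blast
qed

end

theorem proposition5p8:
  fixes V :: "'a set" and E :: "'a set set"
  assumes "generalized_wheel V E"
  shows "cycle_extendable V E"
proof -
  obtain k :: nat and h P where k: "odd k" "k \<ge> 3"
    and Pp: "\<forall>i<k. odd (length (P i)) \<and> distinct (P i) \<and> h \<notin> set (P i)"
    and Pd: "\<forall>i<k. \<forall>j<k. i \<noteq> j \<longrightarrow> set (P i) \<inter> set (P j) = {}"
    and V: "V = insert h (\<Union>i<k. set (P i))"
    and E: "E = (\<Union>i<k. path_edges (P i))
            \<union> (\<Union>i<k. {{h, P i ! j} | j. j < length (P i) \<and> even j})
            \<union> (\<Union>i<k. {{last (P i), hd (P ((i + 1) mod k))}})"
  proof -
    from assms[unfolded generalized_wheel_def] obtain k :: nat and h P where H: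
      "odd k \<and> k \<ge> 3 \<and>
        (\<forall>i<k. odd (length (P i)) \<and> distinct (P i) \<and> h \<notin> set (P i)) \<and>
        (\<forall>i<k. \<forall>j<k. i \<noteq> j \<longrightarrow> set (P i) \<inter> set (P j) = {}) \<and>
        V = insert h (\<Union>i<k. set (P i)) \<and>
        E = (\<Union>i<k. path_edges (P i))
            \<union> (\<Union>i<k. {{h, P i ! j} | j. j < length (P i) \<and> even j})
            \<union> (\<Union>i<k. {{last (P i), hd (P ((i + 1) mod k))}})"
      by (elim exE)
    then show ?thesis using that by (elim conjE)
  qed
  interpret W: wheel k h P
  proof
    show "odd k" "k \<ge> 3" by (rule k(1), rule k(2))
    show "\<And>i. i < k \<Longrightarrow> odd (length (P i)) \<and> distinct (P i) \<and> h \<notin> set (P i)"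
      using Pp by blast
    show "\<And>i j. i < k \<Longrightarrow> j < k \<Longrightarrow> i \<noteq> j \<Longrightarrow> set (P i) \<inter> set (P j) = {}"
      using Pd by blast
  qed
  have "absw W.ff W.NN h W.AA V E"
  proof unfold_locales
    show "3 \<le> W.NN" by (rule W.NN3)
    show "odd W.NN" by (rule W.oddNN)
    show "W.ff x = W.ff (x mod int W.NN)" for x by (rule W.ff_per)
    show "inj_on W.ff {0..<int W.NN}"
    proof
      fix x y assume xy: "x \<in> {0..<int W.NN}" "y \<in> {0..<int W.NN}" "W.ff x = W.ff y"
      have nx: "nat x < W.NN" "int (nat x) = x" using xy(1) by auto
      have ny: "nat y < W.NN" "int (nat y) = y" using xy(2) by auto
      have "W.ff x = W.R ! nat x" using W.ff_nat[OF nx(1)] nx(2) by simp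
      moreover have "W.ff y = W.R ! nat y" using W.ff_nat[OF ny(1)] ny(2) by simp
      ultimately have "W.R ! nat x = W.R ! nat y" using xy(3) by simp
      moreover have "nat x < length W.R" "nat y < length W.R" using xy W.NN_def by auto
      ultimately have "nat x = nat y" using W.distinct_R nth_eq_iff_index_eq by blast
      then show "x = y" using nx(2) ny(2) by metis
    qed
    have hR: "h \<notin> set W.R" using W.set_R Pp by auto
    then show "h \<notin> W.ff ` {0..<int W.NN}" using W.ff_img by simp
    show "V = insert h (W.ff ` {0..<int W.NN})" using V W.ff_img W.set_R by simp
    show "E = {{W.ff p, W.ff (p+1)} | p. True} \<union> {{h, W.ff a} | a. a \<in> W.AA}"
      unfolding E W.rim_eq W.hub_eq by (simp only: Un_ac)
    show "\<exists>a\<in>W.AA. odd ((p - a) mod int W.NN)" for p by (rule W.A_cond)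
  qed
  then show ?thesis by (rule absw.cycle_ext)
qed


end
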